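(* Let $W$ and $A$ be finite sets and $V\subseteq W$. Let $\mathcal{P}\subseteq\Delta_W(V)$ be a convex set. Let $\mathcal{G}\subseteq\Delta_{W,A}$ satisfy $\mathcal{G}|_V=\prod_{w\in V}\mathcal{G}_w\subseteq\Delta_{V,A}$, where $\mathcal{G}_w\subseteq\Delta_A$ is a convex set for all $w\in V$. Then $\mathcal{P}\ast\mathcal{G}\subseteq\Delta_{W\times A}$ is convex.
   Context: $\Delta_X$ is the probability simplex on a finite set $X$; $\Delta_{X,Y}=\prod_{x\in X}\Delta_Y$ is the set of Markov kernels $g(y|x)$. For $\mathcal{P}\subseteq\Delta_W$ and $\mathcal{G}\subseteq\Delta_{W,A}$, $\mathcal{P}\ast\mathcal{G}=\{q(w,a)=p(w)g(a|w)\in\Delta_{W\times A}\colon p\in\mathcal{P},g\in\mathcal{G}\}$. For $V\subseteq W$, $\Delta_W(V)=\{p\in\Delta_W\colon \{w\colon p(w)>0\}\subseteq V\}$. For $\mathcal{G}\subseteq\Delta_{W,A}$, $\mathcal{G}|_V=\{h\in\Delta_{V,A}\colon \text{there is } g\in\mathcal{G} \text{ with } h(\cdot|w)=g(\cdot|w)\text{ for all }w\in V\}$. *)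

theory Defs
  imports Complex_Main
begin

definition simplex :: "'x set \<Rightarrow> ('x \<Rightarrow> real) set" where
  "simplex X = {p. (\<forall>x. 0 \<le> p x) \<and> (\<forall>x. x \<notin> X \<longrightarrow> p x = 0) \<and> sum p X = 1}"

text \<open>Markov kernels g(y|x) = g x y, x in X, y in Y; g x is the zero function
  for x outside X (canonical representative).\<close>
definition kernels :: "'x set \<Rightarrow> 'y set \<Rightarrow> ('x \<Rightarrow> 'y \<Rightarrow> real) set" where
  "kernels X Y = {g. (\<forall>x\<in>X. g x \<in> simplex Y) \<and> (\<forall>x. x \<notin> X \<longrightarrow> g x = (\<lambda>_. 0))}"

definition simplex_supp :: "'x set \<Rightarrow> 'x set \<Rightarrow> ('x \<Rightarrow> real) set" where
  "simplex_supp W V = {p \<in> simplex W. {w. p w > 0} \<subseteq> V}"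

definition compose :: "('w \<Rightarrow> real) set \<Rightarrow> ('w \<Rightarrow> 'a \<Rightarrow> real) set \<Rightarrow> ('w \<times> 'a \<Rightarrow> real) set" where
  "compose P G = {q. \<exists>p\<in>P. \<exists>g\<in>G. q = (\<lambda>(w, a). p w * g w a)}"

definition restrict_kernels :: "('w \<Rightarrow> 'a \<Rightarrow> real) set \<Rightarrow> 'w set \<Rightarrow> 'a set \<Rightarrow> ('w \<Rightarrow> 'a \<Rightarrow> real) set" where
  "restrict_kernels G V A = {h \<in> kernels V A. \<exists>g\<in>G. \<forall>w\<in>V. h w = g w}"

definition prod_kernels :: "'w set \<Rightarrow> ('w \<Rightarrow> ('a \<Rightarrow> real) set) \<Rightarrow> ('w \<Rightarrow> 'a \<Rightarrow> real) set" where
  "prod_kernels V Gw = {h. (\<forall>w\<in>V. h w \<in> Gw w) \<and> (\<forall>w. w \<notin> V \<longrightarrow> h w = (\<lambda>_. 0))}"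

definition convex_fun_set :: "('x \<Rightarrow> real) set \<Rightarrow> bool" where
  "convex_fun_set S \<longleftrightarrow> (\<forall>x\<in>S. \<forall>y\<in>S. \<forall>t::real. 0 \<le> t \<and> t \<le> 1 \<longrightarrow>
      (\<lambda>z. t * x z + (1 - t) * y z) \<in> S)"

end

theory Submission
  imports Defs
begin

theorem proposition7:
  fixes W :: "'w set" and A :: "'a set" and V :: "'w set"
    and P :: "('w \<Rightarrow> real) set" and G :: "('w \<Rightarrow> 'a \<Rightarrow> real) set"
    and Gw :: "'w \<Rightarrow> ('a \<Rightarrow> real) set"
  assumes "finite W" and "finite A" and "V \<subseteq> W"
    and "P \<subseteq> simplex_supp W V" and "convex_fun_set P"
    and "G \<subseteq> kernels W A"
    and "\<forall>w\<in>V. Gw w \<subseteq> simplex A \<and> convex_fun_set (Gw w)"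
    and "restrict_kernels G V A = prod_kernels V Gw"
  shows "convex_fun_set (compose P G)"
proof -
  have inGw: "g w \<in> Gw w" if g: "g \<in> G" and w: "w \<in> V" for g w
  proof -
    define h where "h = (\<lambda>x. if x \<in> V then g x else (\<lambda>_. 0::real))"
    have "g \<in> kernels W A" using g assms(6) by auto
    hence "h \<in> kernels V A" using assms(3) unfolding kernels_def h_def by auto
    hence "h \<in> restrict_kernels G V A" unfolding restrict_kernels_def h_def using g by auto
    hence "h \<in> prod_kernels V Gw" using assms(8) by simp
    thus ?thesis using w unfolding prod_kernels_def h_def by auto
  qed
  have supp: "p w = 0" if "p \<in> P" "w \<notin> V" for p w
  proof -
    have "p \<in> simplex_supp W V" using that assms(4) by auto
    hence "0 \<le> p w" "\<not> p w > 0" using that(2) unfolding simplex_supp_def simplex_def by auto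
    thus ?thesis by simp
  qed
  have nonneg: "0 \<le> p w" if "p \<in> P" for p w
    using that assms(4) unfolding simplex_supp_def simplex_def by auto
  show ?thesis unfolding convex_fun_set_def
  proof (intro ballI allI impI)
    fix x y and t :: real
    assume x: "x \<in> compose P G" and y: "y \<in> compose P G" and t: "0 \<le> t \<and> t \<le> 1"
    obtain p1 g1 where p1: "p1 \<in> P" and g1: "g1 \<in> G" and xd: "x = (\<lambda>(w, a). p1 w * g1 w a)"
      using x unfolding compose_def by auto
    obtain p2 g2 where p2: "p2 \<in> P" and g2: "g2 \<in> G" and yd: "y = (\<lambda>(w, a). p2 w * g2 w a)"
      using y unfolding compose_def by auto
    define p where "p = (\<lambda>w. t * p1 w + (1 - t) * p2 w)"
    have pP: "p \<in> P" using assms(5) p1 p2 t unfolding convex_fun_set_def p_def by blast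
    define s where "s = (\<lambda>w. t * p1 w / p w)"
    define h where "h = (\<lambda>w. if w \<in> V then (if p w > 0 then (\<lambda>a. s w * g1 w a + (1 - s w) * g2 w a) else g1 w) else (\<lambda>_. 0::real))"
    have hG: "h w \<in> Gw w" if w: "w \<in> V" for w
    proof (cases "p w > 0")
      case True
      have a: "0 \<le> t * p1 w" "0 \<le> (1 - t) * p2 w" using t nonneg[OF p1] nonneg[OF p2] by auto
      have "s w \<le> 1" using True a unfolding s_def p_def by (simp add: divide_le_eq_1)
      moreover have "0 \<le> s w" using True a unfolding s_def by simp
      ultimately have "(\<lambda>a. s w * g1 w a + (1 - s w) * g2 w a) \<in> Gw w"
        using assms(7) w inGw[OF g1 w] inGw[OF g2 w] unfolding convex_fun_set_def by blast
      thus ?thesis using True w unfolding h_def by simp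
    next
      case False
      thus ?thesis using w inGw[OF g1 w] unfolding h_def by simp
    qed
    have "h \<in> prod_kernels V Gw" using hG unfolding prod_kernels_def h_def by auto
    hence "h \<in> restrict_kernels G V A" using assms(8) by simp
    then obtain g where g: "g \<in> G" and gh: "\<forall>w\<in>V. h w = g w" unfolding restrict_kernels_def by auto
    have "(\<lambda>z. t * x z + (1 - t) * y z) = (\<lambda>(w, a). p w * g w a)"
    proof (rule ext, clarify)
      fix w a
      show "t * x (w, a) + (1 - t) * y (w, a) = p w * g w a"
      proof (cases "w \<in> V")
        case False
        thus ?thesis using supp[OF p1 False] supp[OF p2 False] supp[OF pP False] xd yd by simp
      next
        case True
        hence gw: "g w = h w" using gh by simp
        show ?thesis
        proof (cases "p w > 0")
          case True
          have "p w * g w a = p w * (s w * g1 w a + (1 - s w) * g2 w a)"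
            using True \<open>w \<in> V\<close> gw unfolding h_def by simp
          also have "\<dots> = (p w * s w) * g1 w a + (p w - p w * s w) * g2 w a"
            by (simp add: algebra_simps)
          also have "p w * s w = t * p1 w" using True unfolding s_def by simp
          also have "p w - t * p1 w = (1 - t) * p2 w" unfolding p_def by simp
          finally have "p w * g w a = t * p1 w * g1 w a + (1 - t) * p2 w * g2 w a" .
          thus ?thesis using xd yd by simp
        next
          case False
          have a: "0 \<le> t * p1 w" "0 \<le> (1 - t) * p2 w" using t nonneg[OF p1] nonneg[OF p2] by auto
          hence e1: "t * p1 w = 0" "(1 - t) * p2 w = 0" using False unfolding p_def by linarith+
          have "t * x (w, a) + (1 - t) * y (w, a) = (t * p1 w) * g1 w a + ((1 - t) * p2 w) * g2 w a"
            using xd yd by (simp add: algebra_simps)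
          hence "t * x (w, a) + (1 - t) * y (w, a) = 0" using e1 by simp
          moreover have "p w = 0" using False a unfolding p_def by auto
          ultimately show ?thesis using xd yd by (simp add: mult.assoc[symmetric])
        qed
      qed
    qed
    thus "(\<lambda>z. t * x z + (1 - t) * y z) \<in> compose P G" unfolding compose_def using pP g by blast
  qed
qed

end
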